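(* There exists a constant $c>0$ such that for all sufficiently large $n\in\mathbb{N}$ there exists an $n$-vertex $3$-uniform generalised hedgehog $H^*$ with \[R(H^* )\ \ge\ c\,\frac{n^{3/2}}{\log n}.\] In particular, $H^*$ is a $1$-degenerate $3$-uniform hypergraph on $n$ vertices whose $2$-colour Ramsey number is not $O(n)$.
   Context: A $3$-graph is a $3$-uniform hypergraph. For $3$-graphs $G,H$, the ($2$-colour) Ramsey number $R(G,H)$ is the least $N$ such that every colouring of the edges of the complete $3$-graph on $N$ vertices with red and blue contains a blue copy of $G$ or a red copy of $H$; $R(G)=R(G,G)$. The degree of a vertex is the number of edges containing it; a hypergraph is $D$-degenerate if every subhypergraph has a vertex of degree at most $D$ in that subhypergraph. A (generalised) hedgehog is a $3$-graph on vertex set $B\sqcup S$ ($B$ the body, $S$ the spikes) in which every edge consists of one spike and two body vertices, and every spike lies in exactly one edge (different spikes may be attached to the same pair of body vertices, and some pairs of body vertices may have no spike). Every generalised hedgehog is $1$-degenerate. *)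

theory Defs
  imports Complex_Main
begin

definition three_graph :: "'a set \<Rightarrow> 'a set set \<Rightarrow> bool" where
  "three_graph V E \<longleftrightarrow> finite V \<and> (\<forall>e\<in>E. e \<subseteq> V \<and> card e = 3)"

definition gen_hedgehog :: "'a set \<Rightarrow> 'a set set \<Rightarrow> bool" where
  "gen_hedgehog V E \<longleftrightarrow> three_graph V E \<and>
     (\<exists>B S. B \<inter> S = {} \<and> V = B \<union> S \<and>
        (\<forall>e\<in>E. card (e \<inter> S) = 1 \<and> card (e \<inter> B) = 2) \<and>
        (\<forall>s\<in>S. \<exists>!e. e \<in> E \<and> s \<in> e))"

text \<open>A colouring of the edges of the complete 3-graph on {0..<N}: col e = True
  means e is blue, False means red (only values on 3-subsets of {0..<N} matter).\<close>
definition has_copy :: "nat \<Rightarrow> (nat set \<Rightarrow> bool) \<Rightarrow> bool \<Rightarrow> 'a set \<Rightarrow> 'a set set \<Rightarrow> bool" where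
  "has_copy N col b V E \<longleftrightarrow>
     (\<exists>f. inj_on f V \<and> f ` V \<subseteq> {..<N} \<and> (\<forall>e\<in>E. col (f ` e) = b))"

definition arrows :: "nat \<Rightarrow> 'a set \<Rightarrow> 'a set set \<Rightarrow> 'b set \<Rightarrow> 'b set set \<Rightarrow> bool" where
  "arrows N VG EG VH EH \<longleftrightarrow>
     (\<forall>col. has_copy N col True VG EG \<or> has_copy N col False VH EH)"

definition ramsey2 :: "'a set \<Rightarrow> 'a set set \<Rightarrow> 'b set \<Rightarrow> 'b set set \<Rightarrow> nat" where
  "ramsey2 VG EG VH EH = (LEAST N. arrows N VG EG VH EH)"

definition ramsey :: "'a set \<Rightarrow> 'a set set \<Rightarrow> nat" where
  "ramsey V E = ramsey2 V E V E"

end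

theory Submission
  imports Defs "HOL-Library.Ramsey" "HOL-Library.FuncSet" "HOL-Library.Nat_Bijection" "HOL-Real_Asymp.Real_Asymp"
begin


lemma card_constr:
  assumes "finite P" "Q \<subseteq> P" "R \<subseteq> {..<q}"
  shows "card {c \<in> PiE P (\<lambda>_. {..<q}). \<forall>e\<in>Q. c e \<in> R} = card R ^ card Q * q ^ (card P - card Q)"
proof -
  have eq: "{c \<in> PiE P (\<lambda>_. {..<q}). \<forall>e\<in>Q. c e \<in> R} = PiE P (\<lambda>e. if e \<in> Q then R else {..<q})"
    using assms by (auto simp: PiE_def Pi_def extensional_def split: if_split_asm)
  have "card (PiE P (\<lambda>e. if e \<in> Q then R else {..<q})) = (\<Prod>e\<in>P. if e \<in> Q then card R else q)"
    using assms(1) by (subst card_PiE) (auto intro!: prod.cong)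
  also have "\<dots> = (\<Prod>e\<in>P \<inter> {x. x \<in> Q}. card R) * (\<Prod>e\<in>P \<inter> - {x. x \<in> Q}. q)"
    using assms(1) by (rule prod.If_cases)
  also have "P \<inter> {x. x \<in> Q} = Q" using assms(2) by auto
  also have "P \<inter> - {x. x \<in> Q} = P - Q" by auto
  finally have "card (PiE P (\<lambda>e. if e \<in> Q then R else {..<q})) = card R ^ card Q * q ^ card (P - Q)" by simp
  moreover have "card (P - Q) = card P - card Q" using assms(1,2) by (meson card_Diff_subset finite_subset)
  ultimately show ?thesis using eq by simp
qed

lemma card_constr_real:
  assumes "finite P" "Q \<subseteq> P" "R \<subseteq> {..<q}" "q \<ge> 1"
  shows "real (card {c \<in> PiE P (\<lambda>_. {..<q}). \<forall>e\<in>Q. c e \<in> R}) = real q ^ card P * (real (card R) / real q) ^ card Q"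
proof -
  have le: "card Q \<le> card P" using assms by (simp add: card_mono)
  have "real q ^ card P = real q ^ (card P - card Q) * real q ^ card Q"
    using le by (simp flip: power_add)
  then show ?thesis using assms le by (simp add: card_constr power_divide)
qed

lemma card_UN_le_real: "finite I \<Longrightarrow> real (card (\<Union>i\<in>I. A i)) \<le> (\<Sum>i\<in>I. real (card (A i)))"
  using card_UN_le[of I A] by (simp flip: of_nat_sum)

definition goodc :: "nat \<Rightarrow> nat \<Rightarrow> nat \<Rightarrow> nat \<Rightarrow> (nat set \<Rightarrow> nat) \<Rightarrow> bool" where
  "goodc N k s t c \<longleftrightarrow>
     (\<forall>A. A \<subseteq> {..<N} \<and> card A = k \<longrightarrow> (\<exists>a\<in>A. \<exists>b\<in>A. a \<noteq> b \<and> c {a,b} = 0)) \<and>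
     (\<forall>A. A \<subseteq> {..<N} \<and> card A = s \<longrightarrow> (\<exists>a\<in>A. \<exists>b\<in>A. a \<noteq> b \<and> c {a,b} \<noteq> 0)) \<and>
     (\<forall>v<N. card {w. w < N \<and> w \<noteq> v \<and> c {v,w} = 0} < t)"

lemma exists_goodc:
  assumes q: "q \<ge> 1"
    and ineq: "real (N choose k) * (1 - 1/real q) ^ (k choose 2) + real (N choose s) / real q ^ (s choose 2)
               + real N * real (N choose t) / real q ^ t < 1"
  shows "\<exists>c. goodc N k s t c"
proof -
  define P where "P = nsets {..<N} 2"
  define \<Omega> where "\<Omega> = PiE P (\<lambda>_. {..<q})"
  have finP: "finite P" unfolding P_def by (simp add: finite_imp_finite_nsets)
  have fin\<Omega>: "finite \<Omega>" unfolding \<Omega>_def using finP by (simp add: finite_PiE)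
  have card\<Omega>: "real (card \<Omega>) = real q ^ card P" unfolding \<Omega>_def using finP by (simp add: card_PiE)
  define B1 where "B1 = (\<Union>A\<in>nsets {..<N} k. {c \<in> \<Omega>. \<forall>e\<in>nsets A 2. c e \<in> {1..<q}})"
  define B2 where "B2 = (\<Union>A\<in>nsets {..<N} s. {c \<in> \<Omega>. \<forall>e\<in>nsets A 2. c e \<in> {0}})"
  define B3 where "B3 = (\<Union>v\<in>{..<N}. \<Union>T\<in>nsets ({..<N} - {v}) t. {c \<in> \<Omega>. \<forall>e\<in>(\<lambda>w. {v,w}) ` T. c e \<in> {0}})"
  have "real (card B1) \<le> (\<Sum>A\<in>nsets {..<N} k. real (card {c \<in> \<Omega>. \<forall>e\<in>nsets A 2. c e \<in> {1..<q}}))"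
    unfolding B1_def by (rule card_UN_le_real) (simp add: finite_imp_finite_nsets)
  also have "\<dots> = (\<Sum>A\<in>nsets {..<N} k. real q ^ card P * (1 - 1/real q) ^ (k choose 2))"
  proof (rule sum.cong)
    fix A assume A: "A \<in> nsets {..<N} k"
    have sub: "nsets A 2 \<subseteq> P" using A unfolding P_def nsets_def by auto
    have cA0: "card A = k" using A by (simp add: nsets_def)
    have cA: "card (nsets A 2) = k choose 2" using cA0 by (simp add: card_nsets)
    have "real (card {c \<in> \<Omega>. \<forall>e\<in>nsets A 2. c e \<in> {1..<q}}) = real q ^ card P * (real (card {1..<q}) / real q) ^ card (nsets A 2)"
      unfolding \<Omega>_def by (rule card_constr_real[OF finP sub _ q]) auto
    also have "real (card {1..<q}) / real q = 1 - 1 / real q" using q by (simp add: field_simps of_nat_diff)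
    finally show "real (card {c \<in> \<Omega>. \<forall>e\<in>nsets A 2. c e \<in> {1..<q}}) = real q ^ card P * (1 - 1/real q) ^ (k choose 2)"
      using cA by simp
  qed simp
  also have "\<dots> = real q ^ card P * (real (N choose k) * (1 - 1/real q) ^ (k choose 2))"
    by (simp add: card_nsets)
  finally have b1: "real (card B1) \<le> real q ^ card P * (real (N choose k) * (1 - 1/real q) ^ (k choose 2))" .
  have "real (card B2) \<le> (\<Sum>A\<in>nsets {..<N} s. real (card {c \<in> \<Omega>. \<forall>e\<in>nsets A 2. c e \<in> {0}}))"
    unfolding B2_def by (rule card_UN_le_real) (simp add: finite_imp_finite_nsets)
  also have "\<dots> = (\<Sum>A\<in>nsets {..<N} s. real q ^ card P / real q ^ (s choose 2))"
  proof (rule sum.cong)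
    fix A assume A: "A \<in> nsets {..<N} s"
    have sub: "nsets A 2 \<subseteq> P" using A unfolding P_def nsets_def by auto
    have cA0: "card A = s" using A by (simp add: nsets_def)
    have cA: "card (nsets A 2) = s choose 2" using cA0 by (simp add: card_nsets)
    have "real (card {c \<in> \<Omega>. \<forall>e\<in>nsets A 2. c e \<in> {0}}) = real q ^ card P * (real (card {0::nat}) / real q) ^ card (nsets A 2)"
      unfolding \<Omega>_def by (rule card_constr_real[OF finP sub _ q]) (use q in auto)
    then show "real (card {c \<in> \<Omega>. \<forall>e\<in>nsets A 2. c e \<in> {0}}) = real q ^ card P / real q ^ (s choose 2)"
      using cA by (simp add: power_divide)
  qed simp
  also have "\<dots> = real q ^ card P * (real (N choose s) / real q ^ (s choose 2))"
    by (simp add: card_nsets)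
  finally have b2: "real (card B2) \<le> real q ^ card P * (real (N choose s) / real q ^ (s choose 2))" .
  have "real (card B3) \<le> (\<Sum>v\<in>{..<N}. real (card (\<Union>T\<in>nsets ({..<N} - {v}) t. {c \<in> \<Omega>. \<forall>e\<in>(\<lambda>w. {v,w}) ` T. c e \<in> {0}})))"
    unfolding B3_def by (rule card_UN_le_real) simp
  also have "\<dots> \<le> (\<Sum>v\<in>{..<N}. real q ^ card P * (real (N choose t) / real q ^ t))"
  proof (rule sum_mono)
    fix v assume v: "v \<in> {..<N}"
    have "real (card (\<Union>T\<in>nsets ({..<N} - {v}) t. {c \<in> \<Omega>. \<forall>e\<in>(\<lambda>w. {v,w}) ` T. c e \<in> {0}}))
       \<le> (\<Sum>T\<in>nsets ({..<N} - {v}) t. real (card {c \<in> \<Omega>. \<forall>e\<in>(\<lambda>w. {v,w}) ` T. c e \<in> {0}}))"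
      by (rule card_UN_le_real) (simp add: finite_imp_finite_nsets)
    also have "\<dots> = (\<Sum>T\<in>nsets ({..<N} - {v}) t. real q ^ card P / real q ^ t)"
    proof (rule sum.cong)
      fix T assume T: "T \<in> nsets ({..<N} - {v}) t"
      have sub: "(\<lambda>w. {v,w}) ` T \<subseteq> P" using T v unfolding P_def nsets_def by (auto simp: card_insert_if dest: subsetD)
      have inj: "inj_on (\<lambda>w. {v,w}) T" using T unfolding nsets_def inj_on_def by (auto simp: doubleton_eq_iff)
      have cA: "card ((\<lambda>w. {v,w}) ` T) = t" using T inj unfolding nsets_def by (simp add: card_image)
      have "real (card {c \<in> \<Omega>. \<forall>e\<in>(\<lambda>w. {v,w}) ` T. c e \<in> {0}}) = real q ^ card P * (real (card {0::nat}) / real q) ^ card ((\<lambda>w. {v,w}) ` T)"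
        unfolding \<Omega>_def by (rule card_constr_real[OF finP sub _ q]) (use q in auto)
      then show "real (card {c \<in> \<Omega>. \<forall>e\<in>(\<lambda>w. {v,w}) ` T. c e \<in> {0}}) = real q ^ card P / real q ^ t"
        using cA by (simp add: power_divide)
    qed simp
    also have "\<dots> = real q ^ card P * (real ((N - 1) choose t) / real q ^ t)"
      using v by (simp add: card_nsets)
    also have "\<dots> \<le> real q ^ card P * (real (N choose t) / real q ^ t)"
      using q by (intro mult_left_mono divide_right_mono) (auto simp: binomial_right_mono)
    finally show "real (card (\<Union>T\<in>nsets ({..<N} - {v}) t. {c \<in> \<Omega>. \<forall>e\<in>(\<lambda>w. {v,w}) ` T. c e \<in> {0}}))
       \<le> real q ^ card P * (real (N choose t) / real q ^ t)" .
  qed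
  also have "\<dots> = real q ^ card P * (real N * real (N choose t) / real q ^ t)" by simp
  finally have b3: "real (card B3) \<le> real q ^ card P * (real N * real (N choose t) / real q ^ t)" .
  have "real (card (B1 \<union> B2 \<union> B3)) \<le> real (card B1) + real (card B2) + real (card B3)"
  proof -
    have "card (B1 \<union> B2 \<union> B3) \<le> card (B1 \<union> B2) + card B3" by (rule card_Un_le)
    also have "\<dots> \<le> card B1 + card B2 + card B3" using card_Un_le[of B1 B2] by simp
    finally show ?thesis by (simp flip: of_nat_add)
  qed
  also have "\<dots> \<le> real q ^ card P * (real (N choose k) * (1 - 1/real q) ^ (k choose 2) + real (N choose s) / real q ^ (s choose 2)
               + real N * real (N choose t) / real q ^ t)"
    using b1 b2 b3 by (simp add: distrib_left)
  also have "\<dots> < real q ^ card P * 1"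
    using ineq q by (intro mult_strict_left_mono) auto
  finally have "card (B1 \<union> B2 \<union> B3) < card \<Omega>" using card\<Omega> by simp
  have "\<not> \<Omega> \<subseteq> B1 \<union> B2 \<union> B3"
  proof
    assume "\<Omega> \<subseteq> B1 \<union> B2 \<union> B3"
    moreover have "B1 \<union> B2 \<union> B3 \<subseteq> \<Omega>" unfolding B1_def B2_def B3_def by blast
    ultimately have "B1 \<union> B2 \<union> B3 = \<Omega>" by blast
    then show False using \<open>card (B1 \<union> B2 \<union> B3) < card \<Omega>\<close> by simp
  qed
  then obtain c where c: "c \<in> \<Omega>" "c \<notin> B1" "c \<notin> B2" "c \<notin> B3"
    by blast
  have cval: "c e < q" if "e \<in> P" for e using c(1) that unfolding \<Omega>_def by (auto simp: PiE_iff)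
  have two: "\<exists>a b. e = {a,b} \<and> a \<in> A \<and> b \<in> A \<and> a \<noteq> b" if "e \<in> nsets A 2" for e A
  proof -
    have "e \<subseteq> A" "card e = 2" using that by (auto simp: nsets_def)
    then obtain a b where "e = {a,b}" "a \<noteq> b" by (auto simp: card_2_iff)
    then show ?thesis using \<open>e \<subseteq> A\<close> by blast
  qed
  have g1: "\<exists>a\<in>A. \<exists>b\<in>A. a \<noteq> b \<and> c {a,b} = 0" if "A \<subseteq> {..<N}" "card A = k" for A
  proof -
    have fA: "finite A" using that finite_subset by blast
    have An: "A \<in> nsets {..<N} k" using that fA by (simp add: nsets_def)
    have "c \<notin> {c \<in> \<Omega>. \<forall>e\<in>nsets A 2. c e \<in> {1..<q}}" using c(2) An unfolding B1_def by blast
    then obtain e where e: "e \<in> nsets A 2" "c e \<notin> {1..<q}" using c(1) by blast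
    have "e \<in> P" using e(1) that unfolding P_def nsets_def by auto
    then have "c e = 0" using e cval by fastforce
    moreover obtain a b where "e = {a,b}" "a \<in> A" "b \<in> A" "a \<noteq> b" using two[OF e(1)] by blast
    ultimately show ?thesis by blast
  qed
  have g2: "\<exists>a\<in>A. \<exists>b\<in>A. a \<noteq> b \<and> c {a,b} \<noteq> 0" if "A \<subseteq> {..<N}" "card A = s" for A
  proof -
    have fA: "finite A" using that finite_subset by blast
    have An: "A \<in> nsets {..<N} s" using that fA by (simp add: nsets_def)
    have "c \<notin> {c \<in> \<Omega>. \<forall>e\<in>nsets A 2. c e \<in> {0}}" using c(3) An unfolding B2_def by blast
    then obtain e where e: "e \<in> nsets A 2" "c e \<notin> {0}" using c(1) by blast
    moreover obtain a b where "e = {a,b}" "a \<in> A" "b \<in> A" "a \<noteq> b" using two[OF e(1)] by blast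
    ultimately show ?thesis by blast
  qed
  have g3: "card {w. w < N \<and> w \<noteq> v \<and> c {v,w} = 0} < t" if "v < N" for v
  proof (rule ccontr)
    assume "\<not> ?thesis"
    then obtain T where T: "T \<subseteq> {w. w < N \<and> w \<noteq> v \<and> c {v,w} = 0}" "card T = t"
      by (meson not_less obtain_subset_with_card_n)
    have Tn: "T \<in> nsets ({..<N} - {v}) t" using T by (auto simp: nsets_def intro: finite_subset)
    have "c \<in> {c \<in> \<Omega>. \<forall>e\<in>(\<lambda>w. {v,w}) ` T. c e \<in> {0}}" using T c(1) by auto
    then have "c \<in> B3" unfolding B3_def using Tn that by blast
    then show False using c(4) by blast
  qed
  show ?thesis unfolding goodc_def using g1 g2 g3 by blast
qed



definition hX :: "nat \<Rightarrow> nat \<Rightarrow> nat \<Rightarrow> (nat \<times> nat \<times> nat) set" where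
  "hX k s M = {x. fst x < fst (snd x) \<and> fst (snd x) < k \<and> snd (snd x) = 0} \<union>
              {x. fst x < fst (snd x) \<and> fst (snd x) < s \<and> snd (snd x) < M}"

definition henc :: "nat \<Rightarrow> nat \<times> nat \<times> nat \<Rightarrow> nat" where
  "henc K x = K + prod_encode (fst x, prod_encode (snd x))"

definition hV :: "nat \<Rightarrow> nat \<Rightarrow> nat \<Rightarrow> nat \<Rightarrow> nat set" where
  "hV K k s M = {..<K} \<union> henc K ` hX k s M"

definition hE :: "nat \<Rightarrow> nat \<Rightarrow> nat \<Rightarrow> nat \<Rightarrow> nat set set" where
  "hE K k s M = (\<lambda>x. {fst x, fst (snd x), henc K x}) ` hX k s M"

lemma inj_henc: "inj (henc K)"
  by (simp add: inj_def henc_def prod_encode_eq prod_eq_iff)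

lemma henc_ge: "henc K x \<ge> K" unfolding henc_def by simp

lemma hX_sub: "hX k s M \<subseteq> ({..<k} \<times> {..<k} \<times> {0}) \<union> ({..<s} \<times> {..<s} \<times> {..<M})"
  unfolding hX_def by (auto simp: mem_Times_iff) 

lemma finite_hX: "finite (hX k s M)"
  by (rule finite_subset[OF hX_sub]) auto

lemma card_hX: "card (hX k s M) \<le> k*k + s*s*M"
proof -
  have "card (hX k s M) \<le> card (({..<k} \<times> {..<k} \<times> {0}) \<union> ({..<s} \<times> {..<s} \<times> {..<M}))"
    by (rule card_mono[OF _ hX_sub]) auto
  also have "\<dots> \<le> card ({..<k} \<times> {..<k} \<times> {0::nat}) + card ({..<s} \<times> {..<s} \<times> {..<M})"
    by (rule card_Un_le)
  also have "\<dots> = k*k + s*s*M" by (simp add: card_cartesian_product)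
  finally show ?thesis .
qed

lemma card_hV:
  shows "card (hV K k s M) = K + card (hX k s M)"
proof -
  have "{..<K} \<inter> henc K ` hX k s M = {}" by (auto simp: henc_def)
  then have "card (hV K k s M) = card {..<K} + card (henc K ` hX k s M)"
    unfolding hV_def by (intro card_Un_disjoint) (auto simp: finite_hX)
  also have "card (henc K ` hX k s M) = card (hX k s M)"
    by (rule card_image) (meson inj_henc inj_on_subset subset_UNIV)
  finally show ?thesis by simp
qed

lemma hX_lt: assumes "x \<in> hX k s M" "s \<le> k" shows "fst x < fst (snd x)" "fst (snd x) < k"
  using assms unfolding hX_def by auto

lemma gen_hedgehog_h:
  assumes "s \<le> k" "k \<le> K"
  shows "gen_hedgehog (hV K k s M) (hE K k s M)"
proof -
  define S where "S = henc K ` hX k s M"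
  have edge3: "card {fst x, fst (snd x), henc K x} = 3" if "x \<in> hX k s M" for x
  proof -
    have "fst x < fst (snd x)" "fst (snd x) < K" using hX_lt[OF that assms(1)] assms(2) by auto
    moreover have "henc K x \<ge> K" by (rule henc_ge)
    ultimately show ?thesis by auto
  qed
  have tg: "three_graph (hV K k s M) (hE K k s M)"
    unfolding three_graph_def
  proof (intro conjI ballI)
    show "finite (hV K k s M)" unfolding hV_def by (simp add: finite_hX)
  next
    fix e assume "e \<in> hE K k s M"
    then obtain x where x: "x \<in> hX k s M" "e = {fst x, fst (snd x), henc K x}" unfolding hE_def by blast
    have "fst x < K" "fst (snd x) < K" using hX_lt[OF x(1) assms(1)] assms(2) by auto
    then show "e \<subseteq> hV K k s M" using x unfolding hV_def by auto
    show "card e = 3" using x edge3 by simp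
  qed
  have disj: "{..<K} \<inter> S = {}" unfolding S_def by (auto simp: henc_def)
  have p1: "card (e \<inter> S) = 1 \<and> card (e \<inter> {..<K}) = 2" if he: "e \<in> hE K k s M" for e
  proof -
    obtain x where x: "x \<in> hX k s M" "e = {fst x, fst (snd x), henc K x}" using he unfolding hE_def by blast
    have lt: "fst x < fst (snd x)" "fst (snd x) < K" using hX_lt[OF x(1) assms(1)] assms(2) by auto
    have "fst x \<notin> S" "fst (snd x) \<notin> S" using lt disj by (auto simp: disjoint_iff)
    moreover have "henc K x \<in> S" using x(1) unfolding S_def by auto
    ultimately have "e \<inter> S = {henc K x}" using x(2) by auto
    moreover have "e \<inter> {..<K} = {fst x, fst (snd x)}" using x(2) lt henc_ge[of K x] by auto
    ultimately show ?thesis using lt by auto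
  qed
  have p2: "\<exists>!e. e \<in> hE K k s M \<and> z \<in> e" if hz: "z \<in> S" for z
  proof -
    obtain x where x: "x \<in> hX k s M" "z = henc K x" using hz unfolding S_def by blast
    show ?thesis
    proof (rule ex1I[of _ "{fst x, fst (snd x), henc K x}"])
      show "{fst x, fst (snd x), henc K x} \<in> hE K k s M \<and> z \<in> {fst x, fst (snd x), henc K x}"
        using x unfolding hE_def by auto
    next
      fix e assume e: "e \<in> hE K k s M \<and> z \<in> e"
      then obtain y where y: "y \<in> hX k s M" "e = {fst y, fst (snd y), henc K y}" unfolding hE_def by blast
      have lt: "fst y < K" "fst (snd y) < K" using hX_lt[OF y(1) assms(1)] assms(2) by auto
      have "z \<ge> K" using x henc_ge by simp
      then have "z = henc K y" using e y lt by auto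
      then have "x = y" using x inj_henc by (metis injD)
      then show "e = {fst x, fst (snd x), henc K x}" using y by simp
    qed
  qed
  have h2: "hV K k s M = {..<K} \<union> S" unfolding hV_def S_def by simp
  have h3: "\<forall>e\<in>hE K k s M. card (e \<inter> S) = 1 \<and> card (e \<inter> {..<K}) = 2" using p1 by blast
  have h4: "\<forall>z\<in>S. \<exists>!e. e \<in> hE K k s M \<and> z \<in> e" using p2 by blast
  show ?thesis unfolding gen_hedgehog_def using tg disj h2 h3 h4 by blast
qed



lemma arrows_exists:
  assumes tg: "three_graph V E"
  shows "\<exists>N. arrows N V E V E"
proof -
  obtain N :: nat where N: "partn_lst {..<N} [card V, card V] 3" using ramsey_full[of "[card V, card V]" 3] by (elim exE)
  have finV: "finite V" using tg unfolding three_graph_def by blast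
  have "arrows N V E V E" unfolding arrows_def
  proof
    fix col :: "nat set \<Rightarrow> bool"
    define g where "g T = (if col T then 0 else 1::nat)" for T
    have "g \<in> nsets {..<N} 3 \<rightarrow> {..<length [card V, card V]}" unfolding g_def by auto
    then have "\<exists>i<length [card V, card V]. monochromatic {..<N} ([card V, card V] ! i) 3 g i"
      using N unfolding partn_lst_def by blast
    then obtain i :: nat where i0: "i < length [card V, card V]" "monochromatic {..<N} ([card V, card V] ! i) 3 g i"
      by blast
    have i: "i < 2" "monochromatic {..<N} ([card V, card V] ! i) 3 g i" using i0 by auto
    have "[card V, card V] ! i = card V" using i(1) by (cases i) auto
    then obtain H where H: "H \<in> nsets {..<N} (card V)" "g ` nsets H 3 \<subseteq> {i}"
      using i(2) unfolding monochromatic_def by auto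
    have finH: "finite H" "card H = card V" "H \<subseteq> {..<N}" using H(1) unfolding nsets_def by auto
    obtain h where h: "bij_betw h V H" using finite_same_card_bij[OF finV finH(1)] finH(2) by auto
    have hinj: "inj_on h V" and himg: "h ` V = H" using h by (auto simp: bij_betw_def)
    have ecol: "col (h ` e) = (i = 0)" if "e \<in> E" for e
    proof -
      have eV: "e \<subseteq> V" "card e = 3" using tg that unfolding three_graph_def by auto
      have "card (h ` e) = 3" using eV hinj by (metis card_image inj_on_subset)
      moreover have "h ` e \<subseteq> H" using eV himg by auto
      ultimately have "h ` e \<in> nsets H 3" unfolding nsets_def using finH(1) finite_subset by blast
      then have "g (h ` e) = i" using H(2) by auto
      then show ?thesis using i(1) unfolding g_def by (auto split: if_splits)
    qed
    have "has_copy N col (i = 0) V E" unfolding has_copy_def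
      using hinj himg finH(3) ecol by blast
    then show "has_copy N col True V E \<or> has_copy N col False V E" by (cases "i = 0") auto
  qed
  then show ?thesis by blast
qed

lemma ramsey_gt:
  assumes tg: "three_graph V E" and no: "\<And>N. N \<le> N' \<Longrightarrow> \<not> arrows N V E V E"
  shows "N' < ramsey V E"
proof -
  have "arrows (ramsey V E) V E V E"
    unfolding ramsey_def ramsey2_def using arrows_exists[OF tg] by (rule LeastI_ex)
  then show ?thesis using no not_less by blast
qed

lemma no_arrows:
  assumes good: "goodc N' k s t c" and sk: "s \<le> k" "k \<le> K" and M: "2*t \<le> M" and N: "N \<le> N'"
  shows "\<not> arrows N (hV K k s M) (hE K k s M) (hV K k s M) (hE K k s M)"
proof
  let ?V = "hV K k s M" and ?E = "hE K k s M"
  assume arr: "arrows N ?V ?E ?V ?E"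
  define col where "col T = (\<not>(\<exists>a\<in>T. \<exists>b\<in>T. a \<noteq> b \<and> c {a,b} = 0))" for T
  have g1: "\<And>A. A \<subseteq> {..<N'} \<Longrightarrow> card A = k \<Longrightarrow> \<exists>a\<in>A. \<exists>b\<in>A. a \<noteq> b \<and> c {a,b} = 0"
   and g2: "\<And>A. A \<subseteq> {..<N'} \<Longrightarrow> card A = s \<Longrightarrow> \<exists>a\<in>A. \<exists>b\<in>A. a \<noteq> b \<and> c {a,b} \<noteq> 0"
   and g3: "\<And>v. v < N' \<Longrightarrow> card {w. w < N' \<and> w \<noteq> v \<and> c {v,w} = 0} < t"
    using good unfolding goodc_def by auto
  have edge_in: "{i, j, henc K (i,j,l)} \<in> ?E" if "(i,j,l) \<in> hX k s M" for i j l
    unfolding hE_def using that by force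
  have kV: "{..<K} \<subseteq> ?V" unfolding hV_def by auto
  have hencV: "henc K x \<in> ?V" if "x \<in> hX k s M" for x unfolding hV_def using that by auto
  from arr have "has_copy N col True ?V ?E \<or> has_copy N col False ?V ?E" unfolding arrows_def by blast
  then show False
  proof
    assume "has_copy N col True ?V ?E"
    then obtain f where f: "inj_on f ?V" "f ` ?V \<subseteq> {..<N}" "\<forall>e\<in>?E. col (f ` e)" unfolding has_copy_def by auto
    have sub: "{..<k} \<subseteq> ?V" using kV sk by auto
    have ck: "card (f ` {..<k}) = k" using card_image[OF inj_on_subset[OF f(1) sub]] by simp
    have "f ` {..<k} \<subseteq> f ` ?V" by (rule image_mono[OF sub])
    also have "\<dots> \<subseteq> {..<N}" by (rule f(2))
    also have "\<dots> \<subseteq> {..<N'}" using N by auto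
    finally have "\<exists>a\<in>f ` {..<k}. \<exists>b\<in>f ` {..<k}. a \<noteq> b \<and> c {a,b} = 0" using g1 ck by blast
    then obtain i j where ij: "i < k" "j < k" "f i \<noteq> f j" "c {f i, f j} = 0" by blast
    then have "i \<noteq> j" by auto
    define x where "x = (min i j, max i j, 0::nat)"
    have xX: "x \<in> hX k s M" unfolding x_def hX_def using ij \<open>i \<noteq> j\<close> by auto
    have "{min i j, max i j, henc K x} \<in> ?E" using edge_in xX unfolding x_def by simp
    then have cl: "col (f ` {min i j, max i j, henc K x})" using f(3) by blast
    have "i \<in> {min i j, max i j, henc K x}" "j \<in> {min i j, max i j, henc K x}"
      by (auto simp: min_def max_def)
    then have "f i \<in> f ` {min i j, max i j, henc K x}" "f j \<in> f ` {min i j, max i j, henc K x}"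
      by blast+
    then show False using cl ij(3,4) unfolding col_def by blast
  next
    assume "has_copy N col False ?V ?E"
    then obtain f where f: "inj_on f ?V" "f ` ?V \<subseteq> {..<N}" "\<forall>e\<in>?E. \<not> col (f ` e)" unfolding has_copy_def by auto
    have sub: "{..<s} \<subseteq> ?V" using kV sk by auto
    have ck: "card (f ` {..<s}) = s" using card_image[OF inj_on_subset[OF f(1) sub]] by simp
    have "f ` {..<s} \<subseteq> f ` ?V" by (rule image_mono[OF sub])
    also have "\<dots> \<subseteq> {..<N}" by (rule f(2))
    also have "\<dots> \<subseteq> {..<N'}" using N by auto
    finally have "\<exists>a\<in>f ` {..<s}. \<exists>b\<in>f ` {..<s}. a \<noteq> b \<and> c {a,b} \<noteq> 0" using g2 ck by blast
    then obtain i j where ij: "i < s" "j < s" "f i \<noteq> f j" "c {f i, f j} \<noteq> 0" by blast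
    then have "i \<noteq> j" by auto
    define i' where "i' = min i j"
    define j' where "j' = max i j"
    have ij': "i' < j'" "j' < s" using ij \<open>i \<noteq> j\<close> unfolding i'_def j'_def by auto
    have ab': "{f i', f j'} = {f i, f j}" unfolding i'_def j'_def by (auto simp: min_def max_def)
    have cij: "c {f i', f j'} \<noteq> 0" using ab' ij(4) by simp
    define w where "w l = f (henc K (i', j', l))" for l
    define Nb where "Nb v = {u. u < N' \<and> u \<noteq> v \<and> c {v,u} = 0}" for v
    have xl: "(i', j', l) \<in> hX k s M" if "l < M" for l unfolding hX_def using ij' that by auto
    have i'V: "i' \<in> ?V" "j' \<in> ?V" using ij' sub by auto
    have fi'N: "f i' < N'" "f j' < N'" using i'V f(2) N by fastforce+
    have wN: "w l \<in> Nb (f i') \<union> Nb (f j')" if l: "l < M" for l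
    proof -
      have e: "{i', j', henc K (i', j', l)} \<in> ?E" using edge_in xl[OF l] by simp
      then have "\<not> col (f ` {i', j', henc K (i', j', l)})" using f(3) by blast
      then obtain a' b' where a'b': "a' \<in> {f i', f j', w l}" "b' \<in> {f i', f j', w l}" "a' \<noteq> b'" "c {a',b'} = 0"
        unfolding col_def w_def by auto
      have wl: "w l < N'" using hencV[OF xl[OF l]] f(2) N unfolding w_def by fastforce
      have hne: "henc K (i',j',l) \<noteq> i'" "henc K (i',j',l) \<noteq> j'"
        using henc_ge[of K "(i',j',l)"] ij' sk by linarith+
      have "w l \<noteq> f i'"
        using inj_onD[OF f(1) _ hencV[OF xl[OF l]] i'V(1)] hne(1) unfolding w_def by blast
      moreover have "w l \<noteq> f j'"
        using inj_onD[OF f(1) _ hencV[OF xl[OF l]] i'V(2)] hne(2) unfolding w_def by blast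
      ultimately have wne: "w l \<noteq> f i'" "w l \<noteq> f j'" by auto
      have "c {f i', w l} = 0 \<or> c {f j', w l} = 0"
        using a'b' cij by (auto simp: insert_commute)
      then show ?thesis unfolding Nb_def using wl wne by auto
    qed
    have injw: "inj_on w {..<M}"
    proof (rule inj_onI)
      fix l1 l2 assume "l1 \<in> {..<M}" "l2 \<in> {..<M}" "w l1 = w l2"
      then have "henc K (i', j', l1) = henc K (i', j', l2)"
        using f(1) hencV xl unfolding w_def by (meson inj_onD lessThan_iff)
      then show "l1 = l2" using inj_henc by (metis injD prod.inject)
    qed
    have "M = card (w ` {..<M})" using injw by (simp add: card_image)
    also have "\<dots> \<le> card (Nb (f i') \<union> Nb (f j'))"
    proof (rule card_mono)
      show "finite (Nb (f i') \<union> Nb (f j'))" unfolding Nb_def by auto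
      show "w ` {..<M} \<subseteq> Nb (f i') \<union> Nb (f j')" using wN by blast
    qed
    also have "\<dots> \<le> card (Nb (f i')) + card (Nb (f j'))" by (rule card_Un_le)
    also have "\<dots> < 2 * t" using g3[OF fi'N(1)] g3[OF fi'N(2)] unfolding Nb_def by simp
    finally show False using M by simp
  qed
qed



lemma choose2_real: "real (k choose 2) = real k * (real k - 1) / 2"
proof (cases k)
  case 0 then show ?thesis by simp
next
  case (Suc m)
  have "k choose 2 = k * (k - 1) div 2" by (rule choose_two)
  moreover have "even (k * (k - 1))" by (cases "even k") auto
  ultimately have "real (k choose 2) = real (k * (k - 1)) / 2" by (simp add: real_of_nat_div)
  then show ?thesis using Suc by (simp add: of_nat_diff algebra_simps)
qed

lemma choose_le_pow_real: "real (n choose k) \<le> real n ^ k"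
proof -
  have "(n choose k) * fact k \<le> n ^ k" by (rule binomial_fact_pow)
  moreover have "(n choose k) \<le> (n choose k) * fact k" using fact_ge_1[where 'a=nat] by simp
  ultimately have "n choose k \<le> n ^ k" by linarith
  then show ?thesis by (metis of_nat_le_iff of_nat_power)
qed

lemma suc_pow_le: "real (Suc t) ^ t \<le> exp 1 * real t ^ t"
proof (cases "t = 0")
  case True then show ?thesis by simp
next
  case False
  then have tp: "real t > 0" by simp
  have eq: "real (Suc t) = real t * (1 + 1 / real t)" using tp by (simp add: field_simps)
  have "real (Suc t) ^ t = (real t * (1 + 1 / real t)) ^ t" by (simp only: eq)
  also have "\<dots> = real t ^ t * (1 + 1 / real t) ^ t" by (simp add: power_mult_distrib)
  also have "(1 + 1 / real t) ^ t \<le> exp (1 / real t) ^ t"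
    by (rule power_mono) (use exp_ge_add_one_self[of "1 / real t"] in auto)
  also have "exp (1 / real t) ^ t = exp 1" using tp by (simp flip: exp_of_nat_mult)
  finally show ?thesis using tp by (simp add: mult.commute mult_left_mono)
qed

lemma fact_lower: "real t ^ t \<le> exp (real t) * fact t"
proof (induction t)
  case 0 then show ?case by simp
next
  case (Suc t)
  have "real (Suc t) ^ Suc t = real (Suc t) * real (Suc t) ^ t" by simp
  also have "\<dots> \<le> real (Suc t) * (exp 1 * real t ^ t)"
    by (rule mult_left_mono[OF suc_pow_le]) simp
  also have "\<dots> \<le> real (Suc t) * (exp 1 * (exp (real t) * fact t))"
    using Suc.IH by (intro mult_left_mono) auto
  also have "\<dots> = exp (real (Suc t)) * fact (Suc t)"
    by (simp add: exp_add algebra_simps)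
  finally show ?case .
qed

lemma T1:
  fixes k q L Nn :: nat
  assumes k: "k \<ge> 2" and q: "q \<ge> 1" and qL: "6 * q * L \<le> k - 1" and Nn: "Nn \<ge> 1"
    and lnN: "ln (real Nn) \<le> 2 * real L" and kL: "k * L \<ge> 2"
  shows "real (Nn choose k) * (1 - 1 / real q) ^ (k choose 2) \<le> exp (-2)"
proof -
  have qp: "real q > 0" using q by simp
  have "(1 - 1 / real q) ^ (k choose 2) \<le> exp (- 1 / real q) ^ (k choose 2)"
  proof (rule power_mono)
    show "1 - 1 / real q \<le> exp (- 1 / real q)" using exp_ge_add_one_self[of "-1 / real q"] by simp
    show "0 \<le> 1 - 1 / real q" using q by (simp add: field_simps)
  qed
  also have "\<dots> = exp (- real (k choose 2) / real q)" by (simp flip: exp_of_nat_mult)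
  finally have b1: "(1 - 1 / real q) ^ (k choose 2) \<le> exp (- real (k choose 2) / real q)" .
  have "real (Nn choose k) \<le> real Nn ^ k" by (rule choose_le_pow_real)
  also have "real Nn ^ k = exp (real k * ln (real Nn))" using Nn by (simp add: exp_of_nat_mult)
  also have "\<dots> \<le> exp (real k * (2 * real L))" using lnN by (intro exp_le_cancel_iff[THEN iffD2] mult_left_mono) auto
  finally have b2: "real (Nn choose k) \<le> exp (2 * real k * real L)" by (simp add: mult_ac)
  have "real (6 * q * L) \<le> real (k - 1)" using qL by (simp only: of_nat_le_iff)
  then have h6: "6 * real q * real L \<le> real k - 1" using k by (simp add: of_nat_diff)
  have "real k * (6 * real q * real L) \<le> real k * (real k - 1)" using h6 by (rule mult_left_mono) simp
  then have "3 * real k * real L * real q \<le> real (k choose 2)" by (simp add: choose2_real mult_ac)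
  then have b3: "real (k choose 2) / real q \<ge> 3 * real k * real L"
    using qp by (simp add: pos_le_divide_eq)
  have "real (Nn choose k) * (1 - 1 / real q) ^ (k choose 2) \<le> exp (2 * real k * real L) * exp (- real (k choose 2) / real q)"
  proof (rule mult_mono[OF b2 b1])
    have "0 \<le> 1 - 1 / real q" using q by (simp add: field_simps)
    then show "0 \<le> (1 - 1 / real q) ^ (k choose 2)" by simp
  qed simp
  also have "\<dots> = exp (2 * real k * real L - real (k choose 2) / real q)" by (simp add: exp_add[symmetric])
  also have "\<dots> \<le> exp (-2)"
  proof -
    have "real k * real L \<ge> 2" using kL by (metis of_nat_le_iff of_nat_mult of_nat_numeral)
    then show ?thesis using b3 by simp
  qed
  finally show ?thesis .
qed

lemma T2:
  fixes q Nn :: nat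
  assumes q: "q \<ge> 1" and h: "3 * Nn \<le> q ^ 4"
  shows "real (Nn choose 9) / real q ^ (9 choose 2) \<le> 1/4"
proof -
  have c: "(9::nat) choose 2 = 36" by (simp add: choose_two)
  have "real (Nn choose 9) \<le> real Nn ^ 9" by (rule choose_le_pow_real)
  have "real ((3 * Nn) ^ 9) \<le> real ((q ^ 4) ^ 9)" using h by (simp only: of_nat_le_iff) (rule power_mono, simp_all)
  then have "3^9 * real Nn ^ 9 \<le> real q ^ 36" by (simp add: power_mult_distrib flip: power_mult)
  then have "19683 * real Nn ^ 9 \<le> real q ^ 36" by simp
  moreover have "0 \<le> real Nn ^ 9" by simp
  ultimately have "4 * real (Nn choose 9) \<le> real q ^ 36" using \<open>real (Nn choose 9) \<le> real Nn ^ 9\<close> by linarith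
  then show ?thesis using q c by (simp add: field_simps)
qed

lemma T3:
  fixes q Nn t :: nat
  assumes t: "t \<ge> 1" and q: "q \<ge> 1" and h1: "8 * Nn \<le> t * q" and h2: "4 * Nn \<le> 2 ^ t"
  shows "real Nn * real (Nn choose t) / real q ^ t \<le> 1/4"
proof -
  have tp: "real t > 0" and qp: "real q > 0" using t q by auto
  have "(Nn choose t) * fact t \<le> Nn ^ t" by (rule binomial_fact_pow)
  then have c1: "real (Nn choose t) * fact t \<le> real Nn ^ t" by (metis of_nat_fact of_nat_le_iff of_nat_mult of_nat_power)
  have c2: "real t ^ t \<le> exp (real t) * fact t" by (rule fact_lower)
  have "real (Nn choose t) * real t ^ t \<le> real (Nn choose t) * (exp (real t) * fact t)"
    using c2 by (intro mult_left_mono) auto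
  also have "\<dots> = exp (real t) * (real (Nn choose t) * fact t)" by simp
  also have "\<dots> \<le> exp (real t) * real Nn ^ t" using c1 by (intro mult_left_mono) auto
  finally have c3: "real (Nn choose t) * real t ^ t \<le> exp (real t) * real Nn ^ t" .
  have "real (Nn choose t) / real q ^ t \<le> exp (real t) * real Nn ^ t / (real t ^ t * real q ^ t)"
    using c3 tp qp by (simp add: field_simps)
  also have "\<dots> = (exp 1 * real Nn / (real t * real q)) ^ t"
    by (simp add: power_mult_distrib power_divide exp_of_nat_mult[symmetric] mult.commute)
  also have "\<dots> \<le> (1/2) ^ t"
  proof (rule power_mono)
    have "8 * real Nn \<le> real t * real q" using h1 by (metis of_nat_le_iff of_nat_mult of_nat_numeral)
    moreover have "exp (1::real) \<le> 4" using exp_le by simp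
    moreover have "exp 1 * real Nn \<le> 4 * real Nn" using \<open>exp (1::real) \<le> 4\<close> by (rule mult_right_mono) simp
    ultimately have "exp 1 * real Nn \<le> 1/2 * (real t * real q)"
      by linarith
    then show "exp 1 * real Nn / (real t * real q) \<le> 1/2" using tp qp by (simp add: field_simps)
    show "0 \<le> exp 1 * real Nn / (real t * real q)" by simp
  qed
  finally have c4: "real (Nn choose t) / real q ^ t \<le> (1/2) ^ t" .
  have "real Nn * real (Nn choose t) / real q ^ t = real Nn * (real (Nn choose t) / real q ^ t)" by simp
  also have "\<dots> \<le> real Nn * (1/2) ^ t" using c4 by (intro mult_left_mono) auto
  also have "\<dots> \<le> 1/4"
  proof -
    have "4 * real Nn \<le> 2 ^ t" using h2 by (metis of_nat_le_iff of_nat_mult of_nat_numeral of_nat_power)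
    then show ?thesis by (simp add: field_simps power_divide)
  qed
  finally show ?thesis .
qed



definition ql :: "real \<Rightarrow> real" where
  "ql x = (sqrt x / 2 - 2) / (6 * (ln x + 1)) - 1"

lemma E1: "eventually (\<lambda>x. ql x \<ge> 1) at_top" unfolding ql_def by real_asymp
lemma E2: "eventually (\<lambda>x. 3 * x / 400 \<le> 8 * ql x ^ 3) at_top" unfolding ql_def by real_asymp
lemma E3: "eventually (\<lambda>x::real. 4 * x^2 \<le> 2 powr (x / 400 - 1)) at_top" by real_asymp
lemma E4: "eventually (\<lambda>x. x powr (3/2) / (50000 * ln x) \<le> (x/400 - 1) * ql x / 8 - 1) at_top" unfolding ql_def by real_asymp
lemma E5: "eventually (\<lambda>x::real. 1 \<le> (x/400 - 1) * ql x / 8 - 1) at_top" unfolding ql_def by real_asymp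
lemma E6: "eventually (\<lambda>x::real. 400 \<le> x \<and> 20 \<le> sqrt x \<and> 1 \<le> ln x \<and> sqrt x / 2 \<le> 0.345 * x) at_top"
  by (intro eventually_conj; real_asymp)



lemma div_bounds:
  fixes a b :: nat assumes "b > 0"
  shows "real a / real b - 1 \<le> real (a div b)" "real (a div b) \<le> real a / real b"
proof -
  have eq: "real a = real b * real (a div b) + real (a mod b)"
    by (metis of_nat_add of_nat_mult div_mult_mod_eq mult.commute)
  have m: "real (a mod b) < real b" using assms by simp
  have bp: "real b > 0" using assms by simp
  show "real a / real b - 1 \<le> real (a div b)"
    using eq m bp by (simp add: field_simps)
  show "real (a div b) \<le> real a / real b"
    using eq bp by (simp add: field_simps)
qed

lemma core:
  fixes n :: nat
  defines "x \<equiv> real n"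
  assumes h1: "ql x \<ge> 1" and h2: "3 * x / 400 \<le> 8 * ql x ^ 3"
    and h3: "4 * x^2 \<le> 2 powr (x / 400 - 1)"
    and h4: "x powr (3/2) / (50000 * ln x) \<le> (x/400 - 1) * ql x / 8 - 1"
    and h5: "1 \<le> (x/400 - 1) * ql x / 8 - 1"
    and h6: "400 \<le> x \<and> 20 \<le> sqrt x \<and> 1 \<le> ln x \<and> sqrt x / 2 \<le> 0.345 * x"
  shows "\<exists>(V::nat set) E. gen_hedgehog V E \<and> card V = n \<and>
             real (ramsey V E) \<ge> 1/50000 * real n powr (3/2) / ln (real n)"
proof -
  have x400: "400 \<le> x" and sx: "20 \<le> sqrt x" and lx: "1 \<le> ln x" and sxx: "sqrt x / 2 \<le> 0.345 * x"
    using h6 by auto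
  have x0: "0 \<le> x" using x400 by simp
  define k where "k = nat \<lfloor>sqrt x / 2\<rfloor>"
  define L where "L = nat \<lceil>ln x\<rceil>"
  define q where "q = (k - 1) div (6 * L)"
  define t where "t = n div 400"
  define Nn where "Nn = t * q div 8"
  have kup: "real k \<le> sqrt x / 2" unfolding k_def using sx by linarith
  have klo: "real k \<ge> sqrt x / 2 - 1" unfolding k_def using sx by linarith
  have Lup: "real L \<le> ln x + 1" unfolding L_def using lx by linarith
  have Llo: "real L \<ge> ln x" unfolding L_def using lx by linarith
  have k9: "k \<ge> 9" using klo sx by linarith
  have L1: "L \<ge> 1" using Llo lx by linarith
  have qlo0: "real q \<ge> real (k - 1) / real (6 * L) - 1" unfolding q_def by (rule div_bounds) (use L1 in simp)
  have "real (k - 1) = real k - 1" using k9 by (simp add: of_nat_diff)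
  then have "real (k - 1) \<ge> sqrt x / 2 - 2" using klo by linarith
  moreover have "real (6 * L) \<le> 6 * (ln x + 1)" using Lup by simp
  moreover have "real (6 * L) > 0" using L1 by simp
  moreover have "sqrt x / 2 - 2 \<ge> 0" using sx by simp
  ultimately have "real (k - 1) / real (6 * L) \<ge> (sqrt x / 2 - 2) / (6 * (ln x + 1))"
    by (intro frac_le) auto
  then have qlo: "real q \<ge> ql x" using qlo0 unfolding ql_def by linarith
  have q1: "q \<ge> 1" using qlo h1 by linarith
  have tlo: "real t \<ge> x / 400 - 1" unfolding t_def x_def using div_bounds(1)[of 400 n] by simp
  have tup: "real t \<le> x / 400" unfolding t_def x_def using div_bounds(2)[of 400 n] by simp
  have t1: "t \<ge> 1" unfolding t_def using x400 unfolding x_def by simp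
  have Nlo0: "real Nn \<ge> real (t * q) / 8 - 1" unfolding Nn_def using div_bounds(1)[of 8 "t*q"] by simp
  have "real t * real q \<ge> (x / 400 - 1) * ql x"
    using tlo qlo h1 x400 by (intro mult_mono) auto
  then have "(x/400 - 1) * ql x / 8 \<le> real t * real q / 8" by (rule divide_right_mono) simp
  moreover have "real Nn \<ge> real t * real q / 8 - 1" using Nlo0 by simp
  ultimately have Nlo: "real Nn \<ge> (x/400 - 1) * ql x / 8 - 1" by linarith
  have N1: "Nn \<ge> 1" using Nlo h5 by linarith
  have N8: "8 * Nn \<le> t * q" unfolding Nn_def by simp
  have qL: "6 * q * L \<le> k - 1" unfolding q_def using div_times_less_eq_dividend[of "k-1" "6*L"] by (simp add: mult_ac)
  have Nup: "real Nn \<le> real t * real q / 8" using N8 by (metis of_nat_le_iff of_nat_mult of_nat_numeral mult.commute le_divide_eq_numeral1(1))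
  have qk: "real q \<le> real k" unfolding q_def by (metis of_nat_le_iff div_le_dividend diff_le_self le_trans)
  have "real k \<le> x" using kup sxx x0 by auto
  then have qx: "real q \<le> x" using qk by linarith
  have Nx2: "real Nn \<le> x^2"
  proof -
    have "real t * real q \<le> x * x" using tup qx x0 by (intro mult_mono) auto
    then show ?thesis using Nup by (simp add: power2_eq_square)
  qed
  have c2: "3 * Nn \<le> q ^ 4"
  proof -
    have "ql x ^ 3 \<le> real q ^ 3" using qlo h1 by (intro power_mono) auto
    then have "3 * (x / 400) \<le> 8 * real q ^ 3" using h2 by simp
    then have "3 * real t \<le> 8 * real q ^ 3" using tup by linarith
    then have "3 * real t * real q \<le> 8 * real q ^ 3 * real q" by (intro mult_right_mono) auto
    then have "3 * real Nn \<le> real q ^ 4" using Nup by (simp add: power_Suc2 eval_nat_numeral mult_ac) 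
    then show ?thesis by (metis of_nat_le_iff of_nat_mult of_nat_numeral of_nat_power)
  qed
  have c3: "4 * Nn \<le> 2 ^ t"
  proof -
    have "2 powr (x / 400 - 1) \<le> 2 powr real t" using tlo by (intro powr_mono) auto
    also have "\<dots> = 2 ^ t" by (simp add: powr_realpow)
    finally have "4 * real Nn \<le> 2 ^ t" using Nx2 h3 by linarith
    then show ?thesis by (metis of_nat_le_iff of_nat_mult of_nat_numeral of_nat_power)
  qed
  have lnN: "ln (real Nn) \<le> 2 * real L"
  proof -
    have "ln (real Nn) \<le> ln (x^2)" using N1 Nx2 by (intro ln_mono) auto
    also have "\<dots> = 2 * ln x" using x400 by (simp add: ln_realpow)
    finally show ?thesis using Llo by linarith
  qed
  have "9 * 1 \<le> k * L" using k9 L1 by (rule mult_le_mono)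
  then have kL: "k * L \<ge> 2" by simp
  have T1v: "real (Nn choose k) * (1 - 1 / real q) ^ (k choose 2) \<le> exp (-2)"
    by (rule T1) (use k9 q1 qL N1 lnN kL in auto)
  have T2v: "real (Nn choose 9) / real q ^ (9 choose 2) \<le> 1/4" by (rule T2[OF q1 c2])
  have T3v: "real Nn * real (Nn choose t) / real q ^ t \<le> 1/4" by (rule T3[OF t1 q1 N8 c3])
  have e2: "exp (-2::real) < 1/2"
  proof -
    have "1 + 2 \<le> exp (2::real)" by (rule exp_ge_add_one_self)
    then show ?thesis by (simp add: exp_minus field_simps)
  qed
  have "real (Nn choose k) * (1 - 1/real q) ^ (k choose 2) + real (Nn choose 9) / real q ^ (9 choose 2)
               + real Nn * real (Nn choose t) / real q ^ t < 1"
    using T1v T2v T3v e2 by linarith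
  then obtain c where good: "goodc Nn k 9 t c" using exists_goodc[OF q1] by blast
  define X where "X = hX k 9 (2 * t)"
  define K where "K = n - card X"
  have "card X \<le> k * k + 9 * 9 * (2 * t)" unfolding X_def by (rule card_hX)
  moreover have "real k * real k \<le> x / 4"
  proof -
    have "real k * real k \<le> (sqrt x / 2) * (sqrt x / 2)" using kup x0 by (intro mult_mono) auto
    also have "\<dots> = x / 4" using x0 by (simp add: field_simps)
    finally show ?thesis .
  qed
  moreover have "real (card X) \<le> real k * real k + 162 * real t"
  proof -
    have "real (card X) \<le> real (k * k + 9 * 9 * (2 * t))" using \<open>card X \<le> k * k + 9 * 9 * (2 * t)\<close> by (simp only: of_nat_le_iff)
    then show ?thesis by simp
  qed
  moreover have sxx': "500 * sqrt x \<le> 345 * x" using sxx by (simp add: field_simps)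
  ultimately have "real (card X) + real k \<le> x"
    using kup tup by linarith
  then have cXk: "card X + k \<le> n" unfolding x_def by linarith
  have kK: "k \<le> K" unfolding K_def using cXk by simp
  have gh: "gen_hedgehog (hV K k 9 (2*t)) (hE K k 9 (2*t))" by (rule gen_hedgehog_h) (use k9 kK in auto)
  have cV: "card (hV K k 9 (2*t)) = n" using card_hV[of K k 9 "2*t"] cXk unfolding K_def X_def by simp
  have tg: "three_graph (hV K k 9 (2*t)) (hE K k 9 (2*t))" using gh unfolding gen_hedgehog_def by blast
  have "Nn < ramsey (hV K k 9 (2*t)) (hE K k 9 (2*t))"
    unfolding ramsey_def[symmetric]
    by (rule ramsey_gt[OF tg]) (rule no_arrows[OF good], use k9 kK in auto)
  then have "real (ramsey (hV K k 9 (2*t)) (hE K k 9 (2*t))) \<ge> x powr (3/2) / (50000 * ln x)"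
    using Nlo h4 by linarith
  moreover have "x powr (3/2) / (50000 * ln x) = 1/50000 * real n powr (3/2) / ln (real n)"
    unfolding x_def by simp
  ultimately show ?thesis using gh cV by metis
qed



theorem theorem1p1:
  shows "\<exists>c::real. c > 0 \<and> (\<exists>n0::nat. \<forall>n\<ge>n0.
           \<exists>(V::nat set) E. gen_hedgehog V E \<and> card V = n \<and>
             real (ramsey V E) \<ge> c * real n powr (3/2) / ln (real n))"
proof -
  define P where "P x \<longleftrightarrow> ql x \<ge> 1 \<and> 3 * x / 400 \<le> 8 * ql x ^ 3 \<and> 4 * x^2 \<le> 2 powr (x / 400 - 1) \<and>
     x powr (3/2) / (50000 * ln x) \<le> (x/400 - 1) * ql x / 8 - 1 \<and> 1 \<le> (x/400 - 1) * ql x / 8 - 1 \<and>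
     (400 \<le> x \<and> 20 \<le> sqrt x \<and> 1 \<le> ln x \<and> sqrt x / 2 \<le> 0.345 * x)" for x
  have "eventually P at_top" unfolding P_def
    by (rule eventually_conj[OF E1 eventually_conj[OF E2 eventually_conj[OF E3 eventually_conj[OF E4 eventually_conj[OF E5 E6]]]]])
  then have "eventually (\<lambda>n. P (real n)) sequentially"
    by (rule eventually_compose_filterlim[OF _ filterlim_real_sequentially])
  then obtain n0 where n0: "\<And>n. n \<ge> n0 \<Longrightarrow> P (real n)" by (auto simp: eventually_sequentially)
  have "\<forall>n\<ge>n0. \<exists>(V::nat set) E. gen_hedgehog V E \<and> card V = n \<and>
             real (ramsey V E) \<ge> 1/50000 * real n powr (3/2) / ln (real n)"
  proof (intro allI impI)
    fix n assume "n \<ge> n0"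
    then have p: "P (real n)" by (rule n0)
    show "\<exists>(V::nat set) E. gen_hedgehog V E \<and> card V = n \<and>
             real (ramsey V E) \<ge> 1/50000 * real n powr (3/2) / ln (real n)"
      by (rule core) (use p in \<open>simp_all only: P_def\<close>)
  qed
  then show ?thesis by (intro exI[of _ "1/50000"]) auto
qed

end
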